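(* Let $X$ be a quasi-Banach function space over $\mathbf{R}^d$ with the Fatou property and let $T$ be a non-degenerate (sub)linear operator for which $T:X\to X_{\mathrm{weak}}$ is bounded. Then $X\in A$ with \[[X]_A\le C^{-2}\|T\|_{X\to X_{\mathrm{weak}}}^2,\] where $C$ is the constant in the definition of non-degeneracy.
   Context: Cubes are axis-parallel cubes in $\mathbf{R}^d$. A quasi-Banach function space over $\mathbf{R}^d$ is a complete quasi-normed space $X\subseteq L^0(\mathbf{R}^d)$ with the ideal property (if $f\in X$, $|g|\le|f|$ then $g\in X$, $\|g\|_X\le\|f\|_X$) and the saturation property (every set of positive measure contains a subset $F$ of positive measure with $\mathbf{1}_F\in X$). Köthe dual: $\|g\|_{X'}=\sup_{\|f\|_X=1}\int|fg|$. Fatou property: $0\le f_n\uparrow f$ a.e., $\sup\|f_n\|_X<\infty$ imply $f\in X$, $\|f\|_X=\sup\|f_n\|_X$. $X_{\mathrm{weak}}$: $f$ with $\mathbf{1}_{\{|f|>\lambda\}}\in X$ for all $\lambda>0$, $\|f\|_{X_{\mathrm{weak}}}=\sup_\lambda\lambda\|\mathbf{1}_{\{|f|>\lambda\}}\|_X<\infty$. $X\in A$: $\mathbf{1}_Q\in X$ and $\mathbf{1}_Q\in X'$ for all cubes $Q$ and $[X]_A=\sup_Q|Q|^{-1}\|\mathbf{1}_Q\|_X\|\mathbf{1}_Q\|_{X'}<\infty$. An operator $T$ is non-degenerate if there is $C>0$ such that for every $\ell>0$ there is $x_\ell\in\mathbf{R}^d$ such that for all cubes $Q$ of side length $\ell$,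 all $0\le f\in L^1(Q)$ and all $x\in(Q+x_\ell)\cup(Q-x_\ell)$: $|Tf(x)|\ge C\frac1{|Q|}\int_Qf$. *)

theory Defs
  imports "HOL-Analysis.Analysis"
begin

text \<open>Functions in L0(R^d) are represented by real-valued Lebesgue-measurable functions
  on a Euclidean space 'a (the dimension d = DIM('a)); the quasi-Banach function space is a
  set X of such functions together with its quasi-norm q.\<close>

definition qbfs :: "('a::euclidean_space \<Rightarrow> real) set \<Rightarrow> (('a \<Rightarrow> real) \<Rightarrow> real) \<Rightarrow> bool" where
  "qbfs X q \<longleftrightarrow>
     X \<subseteq> borel_measurable lebesgue \<and>
     (\<lambda>x. 0) \<in> X \<and>
     (\<forall>f\<in>X. \<forall>g\<in>X. (\<lambda>x. f x + g x) \<in> X) \<and>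
     (\<forall>f\<in>X. \<forall>c. (\<lambda>x. c * f x) \<in> X) \<and>
     (\<forall>f\<in>X. 0 \<le> q f \<and> (q f = 0 \<longleftrightarrow> (AE x in lebesgue. f x = 0))) \<and>
     (\<forall>f\<in>X. \<forall>c. q (\<lambda>x. c * f x) = \<bar>c\<bar> * q f) \<and>
     (\<exists>K\<ge>1. \<forall>f\<in>X. \<forall>g\<in>X. q (\<lambda>x. f x + g x) \<le> K * (q f + q g)) \<and>
     (\<forall>u::nat \<Rightarrow> 'a \<Rightarrow> real. (\<forall>n. u n \<in> X) \<and>
        (\<forall>e>0. \<exists>N. \<forall>m\<ge>N. \<forall>n\<ge>N. q (\<lambda>x. u m x - u n x) < e)
        \<longrightarrow> (\<exists>f\<in>X. (\<lambda>n. q (\<lambda>x. u n x - f x)) \<longlonglongrightarrow> 0)) \<and>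
     (\<forall>f\<in>X. \<forall>g\<in>borel_measurable lebesgue.
        (AE x in lebesgue. \<bar>g x\<bar> \<le> \<bar>f x\<bar>) \<longrightarrow> g \<in> X \<and> q g \<le> q f) \<and>
     (\<forall>E\<in>sets lebesgue. 0 < emeasure lebesgue E \<longrightarrow>
        (\<exists>F\<in>sets lebesgue. F \<subseteq> E \<and> 0 < emeasure lebesgue F \<and> indicator F \<in> X))"

definition fatou_property :: "('a::euclidean_space \<Rightarrow> real) set \<Rightarrow> (('a \<Rightarrow> real) \<Rightarrow> real) \<Rightarrow> bool" where
  "fatou_property X q \<longleftrightarrow>
     (\<forall>(u::nat \<Rightarrow> 'a \<Rightarrow> real) f.
        (\<forall>n. u n \<in> X) \<and> f \<in> borel_measurable lebesgue \<and>
        (AE x in lebesgue. (\<forall>n. 0 \<le> u n x \<and> u n x \<le> u (Suc n) x) \<and> (\<lambda>n. u n x) \<longlonglongrightarrow> f x) \<and>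
        bdd_above (range (\<lambda>n. q (u n)))
        \<longrightarrow> f \<in> X \<and> q f = (SUP n. q (u n)))"

definition kothe_norm :: "('a::euclidean_space \<Rightarrow> real) set \<Rightarrow> (('a \<Rightarrow> real) \<Rightarrow> real) \<Rightarrow> ('a \<Rightarrow> real) \<Rightarrow> ennreal" where
  "kothe_norm X q g = (SUP f\<in>{f\<in>X. q f = 1}. \<integral>\<^sup>+ x. ennreal \<bar>f x * g x\<bar> \<partial>lebesgue)"

definition in_kothe_dual :: "('a::euclidean_space \<Rightarrow> real) set \<Rightarrow> (('a \<Rightarrow> real) \<Rightarrow> real) \<Rightarrow> ('a \<Rightarrow> real) \<Rightarrow> bool" where
  "in_kothe_dual X q g \<longleftrightarrow> g \<in> borel_measurable lebesgue \<and> kothe_norm X q g < \<infinity>"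

definition weak_norm :: "('a::euclidean_space \<Rightarrow> real) set \<Rightarrow> (('a \<Rightarrow> real) \<Rightarrow> real) \<Rightarrow> ('a \<Rightarrow> real) \<Rightarrow> ennreal" where
  "weak_norm X q f = (SUP l\<in>{0<..}. ennreal (l * q (indicator {x. l < \<bar>f x\<bar>})))"

definition in_weak :: "('a::euclidean_space \<Rightarrow> real) set \<Rightarrow> (('a \<Rightarrow> real) \<Rightarrow> real) \<Rightarrow> ('a \<Rightarrow> real) \<Rightarrow> bool" where
  "in_weak X q f \<longleftrightarrow> f \<in> borel_measurable lebesgue \<and>
     (\<forall>l>0. indicator {x. l < \<bar>f x\<bar>} \<in> X) \<and> weak_norm X q f < \<infinity>"

definition cube_side :: "'a::euclidean_space set \<Rightarrow> real \<Rightarrow> bool" where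
  "cube_side Q l \<longleftrightarrow> 0 < l \<and> (\<exists>a. Q = cbox a (a + l *\<^sub>R One))"

definition cube :: "'a::euclidean_space set \<Rightarrow> bool" where
  "cube Q \<longleftrightarrow> (\<exists>l. cube_side Q l)"

definition A_const :: "('a::euclidean_space \<Rightarrow> real) set \<Rightarrow> (('a \<Rightarrow> real) \<Rightarrow> real) \<Rightarrow> ennreal" where
  "A_const X q = (SUP Q\<in>{Q. cube Q}.
      ennreal (q (indicator Q) / measure lebesgue Q) * kothe_norm X q (indicator Q))"

definition in_class_A :: "('a::euclidean_space \<Rightarrow> real) set \<Rightarrow> (('a \<Rightarrow> real) \<Rightarrow> real) \<Rightarrow> bool" where
  "in_class_A X q \<longleftrightarrow>
     (\<forall>Q. cube Q \<longrightarrow> indicator Q \<in> X \<and> in_kothe_dual X q (indicator Q)) \<and> A_const X q < \<infinity>"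

definition sublinear_on :: "('a::euclidean_space \<Rightarrow> real) set \<Rightarrow> (('a \<Rightarrow> real) \<Rightarrow> ('a \<Rightarrow> real)) \<Rightarrow> bool" where
  "sublinear_on X T \<longleftrightarrow>
     (\<forall>f\<in>X. \<forall>g\<in>X. AE x in lebesgue. \<bar>T (\<lambda>y. f y + g y) x\<bar> \<le> \<bar>T f x\<bar> + \<bar>T g x\<bar>) \<and>
     (\<forall>f\<in>X. \<forall>c. AE x in lebesgue. \<bar>T (\<lambda>y. c * f y) x\<bar> = \<bar>c\<bar> * \<bar>T f x\<bar>)"

definition weak_bound :: "('a::euclidean_space \<Rightarrow> real) set \<Rightarrow> (('a \<Rightarrow> real) \<Rightarrow> real) \<Rightarrow>
    (('a \<Rightarrow> real) \<Rightarrow> ('a \<Rightarrow> real)) \<Rightarrow> real \<Rightarrow> bool" where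
  "weak_bound X q T M \<longleftrightarrow> 0 \<le> M \<and>
     (\<forall>f\<in>X. in_weak X q (T f) \<and> weak_norm X q (T f) \<le> ennreal (M * q f))"

definition bounded_to_weak :: "('a::euclidean_space \<Rightarrow> real) set \<Rightarrow> (('a \<Rightarrow> real) \<Rightarrow> real) \<Rightarrow>
    (('a \<Rightarrow> real) \<Rightarrow> ('a \<Rightarrow> real)) \<Rightarrow> bool" where
  "bounded_to_weak X q T \<longleftrightarrow> (\<exists>M. weak_bound X q T M)"

definition op_norm_weak :: "('a::euclidean_space \<Rightarrow> real) set \<Rightarrow> (('a \<Rightarrow> real) \<Rightarrow> real) \<Rightarrow>
    (('a \<Rightarrow> real) \<Rightarrow> ('a \<Rightarrow> real)) \<Rightarrow> real" where
  "op_norm_weak X q T = Inf {M. weak_bound X q T M}"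

definition nondegenerate :: "(('a::euclidean_space \<Rightarrow> real) \<Rightarrow> ('a \<Rightarrow> real)) \<Rightarrow> real \<Rightarrow> bool" where
  "nondegenerate T C \<longleftrightarrow> 0 < C \<and>
     (\<forall>l>0. \<exists>xl. \<forall>Q f x.
        cube_side Q l \<and> integrable lebesgue f \<and> (\<forall>y. 0 \<le> f y) \<and> (\<forall>y. y \<notin> Q \<longrightarrow> f y = 0) \<and>
        x \<in> ((\<lambda>y. y + xl) ` Q \<union> (\<lambda>y. y - xl) ` Q)
        \<longrightarrow> C * ((\<integral>y. f y \<partial>lebesgue) / measure lebesgue Q) \<le> \<bar>T f x\<bar>)"

end

theory Submission
  imports Defs
begin

lemma cube_facts:
  fixes Q :: "'a::euclidean_space set"
  assumes "cube_side Q l"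
  shows "Q \<in> sets lebesgue" "emeasure lebesgue Q < \<infinity>" "0 < measure lebesgue Q" "0 < emeasure lebesgue Q"
proof -
  obtain a where l: "0 < l" and Q: "Q = cbox a (a + l *\<^sub>R One)" using assms unfolding cube_side_def by auto
  show "Q \<in> sets lebesgue" using Q by simp
  have e: "emeasure lebesgue Q = emeasure lborel Q" using Q by (simp add: emeasure_completion)
  show "emeasure lebesgue Q < \<infinity>" using e Q emeasure_lborel_cbox_finite[of a "a + l *\<^sub>R One"] by simp
  have m: "measure lebesgue Q = measure lborel Q" using e by (simp add: measure_def)
  have "measure lborel Q = l ^ DIM('a)" using Q l
    by (subst Q, subst measure_lborel_cbox) (auto simp: inner_simps)
  also have "\<dots> > 0" using l by simp
  finally show mpos: "0 < measure lebesgue Q" using m by simp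
  then show "0 < emeasure lebesgue Q" using \<open>emeasure lebesgue Q < \<infinity>\<close>
    proof -
    have "emeasure lebesgue Q = ennreal (measure lebesgue Q)"
      using \<open>emeasure lebesgue Q < \<infinity>\<close> by (intro emeasure_eq_ennreal_measure) auto
    then show ?thesis using mpos by simp
  qed
qed
lemma qbfs_meas: "qbfs X q \<Longrightarrow> f \<in> X \<Longrightarrow> f \<in> borel_measurable lebesgue"
  unfolding qbfs_def by blast

lemma qbfs_ideal: "qbfs X q \<Longrightarrow> f \<in> X \<Longrightarrow> g \<in> borel_measurable lebesgue \<Longrightarrow>
   (AE x in lebesgue. \<bar>g x\<bar> \<le> \<bar>f x\<bar>) \<Longrightarrow> g \<in> X \<and> q g \<le> q f"
  unfolding qbfs_def by blast

lemma qbfs_nonneg: "qbfs X q \<Longrightarrow> f \<in> X \<Longrightarrow> 0 \<le> q f"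
  unfolding qbfs_def by blast

lemma qbfs_zero: "qbfs X q \<Longrightarrow> f \<in> X \<Longrightarrow> q f = 0 \<Longrightarrow> AE x in lebesgue. f x = 0"
  unfolding qbfs_def by blast

lemma qbfs_sat: "qbfs X q \<Longrightarrow> E \<in> sets lebesgue \<Longrightarrow> 0 < emeasure lebesgue E \<Longrightarrow>
   \<exists>F\<in>sets lebesgue. F \<subseteq> E \<and> 0 < emeasure lebesgue F \<and> indicator F \<in> X"
  unfolding qbfs_def by blast

lemma q_ind_pos:
  assumes "qbfs X q" "indicator E \<in> X" "E \<in> sets lebesgue" "0 < emeasure lebesgue E"
  shows "0 < q (indicator E)"
proof (rule ccontr)
  assume "\<not> 0 < q (indicator E)"
  then have "q (indicator E) = 0" using qbfs_nonneg[OF assms(1,2)] by simp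
  then have "AE x in lebesgue. (indicator E x :: real) = 0" using qbfs_zero[OF assms(1,2)] by blast
  then have "AE x in lebesgue. x \<notin> E" by (simp add: indicator_eq_0_iff)
  then have "emeasure lebesgue E = 0"
    using AE_iff_measurable[OF assms(3), of "\<lambda>x. x \<notin> E"] by auto
  then show False using assms(4) by simp
qed

lemma lemW:
  fixes T :: "('a::euclidean_space \<Rightarrow> real) \<Rightarrow> ('a \<Rightarrow> real)"
  assumes X: "qbfs X q" and wb: "weak_bound X q T M" and f: "f \<in> X" and E: "E \<in> sets lebesgue"
    and c: "0 < c" and Tf: "\<forall>x\<in>E. c \<le> \<bar>T f x\<bar>"
  shows "indicator E \<in> X \<and> c * q (indicator E) \<le> M * q f"
proof -
  have M: "0 \<le> M" and iw: "in_weak X q (T f)" and wn: "weak_norm X q (T f) \<le> ennreal (M * q f)"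
    using wb f unfolding weak_bound_def by auto
  have Mq: "0 \<le> M * q f" using M qbfs_nonneg[OF X f] by simp
  have key: "indicator E \<in> X \<and> lam * q (indicator E) \<le> M * q f" if lam: "0 < lam" "lam < c" for lam
  proof -
    let ?S = "{x. lam < \<bar>T f x\<bar>}"
    have S: "indicator ?S \<in> X" using iw lam unfolding in_weak_def by auto
    have sub: "E \<subseteq> ?S" using Tf lam by force
    have "(indicator E :: 'a \<Rightarrow> real) \<in> borel_measurable lebesgue" using E by simp
    moreover have "AE x in lebesgue. \<bar>indicator E x :: real\<bar> \<le> \<bar>indicator ?S x\<bar>"
      using sub by (auto simp: indicator_def)
    ultimately have EX: "indicator E \<in> X" and le: "q (indicator E) \<le> q (indicator ?S)"
      using qbfs_ideal[OF X S] by auto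
    have "ennreal (lam * q (indicator ?S)) \<le> weak_norm X q (T f)"
      unfolding weak_norm_def using lam by (intro SUP_upper2[of lam]) auto
    also note wn
    finally have "lam * q (indicator ?S) \<le> M * q f" using Mq by (simp add: ennreal_le_iff)
    moreover have "lam * q (indicator E) \<le> lam * q (indicator ?S)" using le lam by simp
    ultimately show ?thesis using EX by simp
  qed
  have "indicator E \<in> X" using key[of "c/2"] c by simp
  moreover have "c * q (indicator E) \<le> M * q f"
  proof (rule field_le_mult_one_interval)
    fix z :: real assume "0 < z" "z < 1"
    then show "z * (c * q (indicator E)) \<le> M * q f" using key[of "z * c"] c by (simp add: mult.assoc)
  qed
  ultimately show ?thesis by blast
qed

lemma opnorm_bound:
  assumes X: "qbfs X q" and b: "bounded_to_weak X q T"
  shows "weak_bound X q T (op_norm_weak X q T)"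
proof -
  let ?S = "{M. weak_bound X q T M}"
  obtain M0 where M0: "weak_bound X q T M0" using b unfolding bounded_to_weak_def by blast
  have ne: "?S \<noteq> {}" using M0 by blast
  have bdd: "bdd_below ?S" unfolding bdd_below_def weak_bound_def by (intro exI[of _ 0]) auto
  let ?m = "op_norm_weak X q T"
  have m: "?m = Inf ?S" unfolding op_norm_weak_def by simp
  have m0: "0 \<le> ?m" unfolding m using ne by (intro cInf_greatest) (auto simp: weak_bound_def)
  have "in_weak X q (T f) \<and> weak_norm X q (T f) \<le> ennreal (?m * q f)" if f: "f \<in> X" for f
  proof
    show iw: "in_weak X q (T f)" using M0 f unfolding weak_bound_def by auto
    then obtain w where w: "weak_norm X q (T f) = ennreal w" "0 \<le> w"
      unfolding in_weak_def by (cases "weak_norm X q (T f)") auto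
    show "weak_norm X q (T f) \<le> ennreal (?m * q f)"
    proof (rule ccontr)
      assume "\<not> ?thesis"
      then have lt: "?m * q f < w" using w m0 qbfs_nonneg[OF X f] by (simp add: not_le ennreal_less_iff)
      have qf: "0 \<le> q f" using qbfs_nonneg[OF X f] .
      show False
      proof (cases "q f = 0")
        case True
        then have "weak_norm X q (T f) \<le> ennreal (M0 * q f)" using M0 f unfolding weak_bound_def by auto
        then show False using True w lt by simp
      next
        case False
        then have qp: "0 < q f" using qf by simp
        have "Inf ?S < w / q f" using lt qp m by (simp add: field_simps)
        then obtain M where M: "M \<in> ?S" "M < w / q f" using cInf_lessD[OF ne] by blast
        then have "weak_norm X q (T f) \<le> ennreal (M * q f)" using f unfolding weak_bound_def by auto
        moreover have "M * q f < w" using M(2) qp by (simp add: field_simps)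
        moreover have "0 \<le> M" using M(1) unfolding weak_bound_def by simp
        ultimately show False using w qf by (simp add: ennreal_le_iff)
      qed
    qed
  qed
  then show ?thesis unfolding weak_bound_def using m0 by blast
qed

lemma cube_main:
  fixes T :: "('a::euclidean_space \<Rightarrow> real) \<Rightarrow> ('a \<Rightarrow> real)"
  assumes X: "qbfs X q" and wb: "weak_bound X q T M" and nd: "nondegenerate T C"
    and Qs: "cube_side Q l"
  shows "indicator Q \<in> X \<and> in_kothe_dual X q (indicator Q) \<and>
    ennreal (q (indicator Q) / measure lebesgue Q) * kothe_norm X q (indicator Q) \<le> ennreal (M\<^sup>2 / C\<^sup>2)"
proof -
  obtain a where l: "0 < l" and Q: "Q = cbox a (a + l *\<^sub>R One)" using Qs unfolding cube_side_def by auto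
  have Cp: "0 < C" using nd unfolding nondegenerate_def by simp
  have M0: "0 \<le> M" using wb unfolding weak_bound_def by simp
  obtain xl where ND: "\<And>Q f x. cube_side Q l \<Longrightarrow> integrable lebesgue f \<Longrightarrow> (\<forall>y. 0 \<le> f y) \<Longrightarrow>
      (\<forall>y. y \<notin> Q \<longrightarrow> f y = 0) \<Longrightarrow> x \<in> ((\<lambda>y. y + xl) ` Q \<union> (\<lambda>y. y - xl) ` Q) \<Longrightarrow>
      C * ((\<integral>y. f y \<partial>lebesgue) / measure lebesgue Q) \<le> \<bar>T f x\<bar>"
    using nd l unfolding nondegenerate_def by metis
  define Q1 where "Q1 = (\<lambda>y. y + xl) ` Q"
  have "Q1 = cbox (xl + a) (xl + (a + l *\<^sub>R One))"
    unfolding Q1_def Q cbox_translation by (simp add: add.commute)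
  then have Q1s: "cube_side Q1 l" unfolding cube_side_def using l by (intro conjI exI[of _ "xl + a"]) (auto simp: add_ac)
  have Qback: "(\<lambda>y. y - xl) ` Q1 = Q" unfolding Q1_def image_image by simp
  note cQ = cube_facts[OF Qs] and cQ1 = cube_facts[OF Q1s]
  obtain F where F: "F \<in> sets lebesgue" "F \<subseteq> Q" "0 < emeasure lebesgue F" "indicator F \<in> X"
    using qbfs_sat[OF X cQ(1) cQ(4)] by blast
  have Ffin: "emeasure lebesgue F < \<infinity>" using emeasure_mono[OF F(2) cQ(1)] cQ(2) by simp
  have Fint: "(\<integral>y. indicator F y \<partial>lebesgue) = measure lebesgue F"
    using F(1) Ffin by simp
  have Fpos: "0 < measure lebesgue F"
  proof -
    have "emeasure lebesgue F = ennreal (measure lebesgue F)"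
      using Ffin by (intro emeasure_eq_ennreal_measure) auto
    then show ?thesis using F(3) by simp
  qed
  have "\<forall>x\<in>Q1. C * (measure lebesgue F / measure lebesgue Q) \<le> \<bar>T (indicator F) x\<bar>"
  proof
    fix x assume "x \<in> Q1"
    then show "C * (measure lebesgue F / measure lebesgue Q) \<le> \<bar>T (indicator F) x\<bar>"
      using ND[OF Qs, of "indicator F" x] F Ffin Fint unfolding Q1_def by (auto simp: indicator_def)
  qed
  moreover have "0 < C * (measure lebesgue F / measure lebesgue Q)" using Cp Fpos cQ(3) by simp
  ultimately have Q1X: "indicator Q1 \<in> X"
    using lemW[OF X wb F(4) cQ1(1)] by blast
  have Q1int: "(\<integral>y. indicator Q1 y \<partial>lebesgue) = measure lebesgue Q1"
    using cQ1 by simp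
  have "\<forall>x\<in>Q. C \<le> \<bar>T (indicator Q1) x\<bar>"
  proof
    fix x assume "x \<in> Q"
    then have "x \<in> (\<lambda>y. y - xl) ` Q1" using Qback by simp
    then have "C * ((\<integral>y. indicator Q1 y \<partial>lebesgue) / measure lebesgue Q1) \<le> \<bar>T (indicator Q1) x\<bar>"
      using ND[OF Q1s, of "indicator Q1" x] cQ1 by (auto simp: indicator_def)
    then show "C \<le> \<bar>T (indicator Q1) x\<bar>" using Q1int cQ1(3) by simp
  qed
  then have QX: "indicator Q \<in> X" and CM: "C * q (indicator Q) \<le> M * q (indicator Q1)"
    using lemW[OF X wb Q1X cQ(1)] Cp by auto
  have q0: "0 < q (indicator Q)" using q_ind_pos[OF X QX cQ(1) cQ(4)] .
  have q1: "0 < q (indicator Q1)" using q_ind_pos[OF X Q1X cQ1(1) cQ1(4)] .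
  define B where "B = M * measure lebesgue Q / (C * q (indicator Q1))"
  have B0: "0 \<le> B" unfolding B_def using M0 Cp q1 cQ(3) by simp
  have intbound: "(\<integral>\<^sup>+ x. ennreal \<bar>f x * indicator Q x\<bar> \<partial>lebesgue) \<le> ennreal B"
    if f: "f \<in> X" "q f = 1" for f
  proof -
    define h where "h n x = min \<bar>f x\<bar> (real n) * indicator Q x" for n x
    have fm: "f \<in> borel_measurable lebesgue" using qbfs_meas[OF X f(1)] .
    have hm: "h n \<in> borel_measurable lebesgue" for n
      unfolding h_def using fm cQ(1) by measurable
    have hn: "h n \<in> X \<and> q (h n) \<le> q f" for n
      by (rule qbfs_ideal[OF X f(1) hm]) (auto simp: h_def indicator_def)
    have hint: "integrable lebesgue (h n)" for n
    proof (rule Bochner_Integration.integrable_bound)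
      show "integrable lebesgue (\<lambda>x. real n * indicator Q x :: real)" using cQ by simp
      show "h n \<in> borel_measurable lebesgue" by (rule hm)
      show "AE x in lebesgue. norm (h n x) \<le> norm (real n * indicator Q x :: real)"
        by (auto simp: h_def indicator_def)
    qed
    have hb: "(\<integral>x. h n x \<partial>lebesgue) \<le> B" for n
    proof (cases "(\<integral>x. h n x \<partial>lebesgue) \<le> 0")
      case True then show ?thesis using B0 by simp
    next
      case False
      let ?c = "C * ((\<integral>x. h n x \<partial>lebesgue) / measure lebesgue Q)"
      have cpos: "0 < ?c" using False Cp cQ(3) by simp
      have "\<forall>x\<in>Q1. ?c \<le> \<bar>T (h n) x\<bar>"
      proof
        fix x assume "x \<in> Q1"
        then show "?c \<le> \<bar>T (h n) x\<bar>"
          using ND[OF Qs hint, of n x] unfolding Q1_def by (auto simp: h_def indicator_def)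
      qed
      then have "?c * q (indicator Q1) \<le> M * q (h n)"
        using lemW[OF X wb _ cQ1(1) cpos] hn by blast
      also have "\<dots> \<le> M" using hn[of n] f(2) M0 by (simp add: mult_left_le)
      finally have "C * (\<integral>x. h n x \<partial>lebesgue) * q (indicator Q1) \<le> M * measure lebesgue Q"
        using cQ(3) by (simp add: field_simps)
      then show ?thesis unfolding B_def using Cp q1 by (simp add: field_simps)
    qed
    have pw: "ennreal \<bar>f x * indicator Q x\<bar> = (SUP n. ennreal (h n x))" for x
    proof (rule antisym)
      obtain N :: nat where N: "\<bar>f x\<bar> \<le> real N" using real_arch_simple by blast
      have "ennreal \<bar>f x * indicator Q x\<bar> = ennreal (h N x)"
        using N by (auto simp: h_def indicator_def abs_mult)
      then show "ennreal \<bar>f x * indicator Q x\<bar> \<le> (SUP n. ennreal (h n x))"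
        by (metis SUP_upper UNIV_I)
      show "(SUP n. ennreal (h n x)) \<le> ennreal \<bar>f x * indicator Q x\<bar>"
        by (intro SUP_least ennreal_leI) (auto simp: h_def indicator_def abs_mult)
    qed
    have inc: "incseq (\<lambda>n x. ennreal (h n x))"
      unfolding incseq_def le_fun_def
      by (auto intro!: ennreal_leI simp: h_def indicator_def)
    have "(\<integral>\<^sup>+ x. ennreal \<bar>f x * indicator Q x\<bar> \<partial>lebesgue) = (SUP n. \<integral>\<^sup>+ x. ennreal (h n x) \<partial>lebesgue)"
      unfolding pw by (rule nn_integral_monotone_convergence_SUP[OF inc]) (use hm in auto)
    also have "\<dots> = (SUP n. ennreal (\<integral>x. h n x \<partial>lebesgue))"
      by (intro SUP_cong refl nn_integral_eq_integral hint) (auto simp: h_def)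
    also have "\<dots> \<le> ennreal B" by (intro SUP_least ennreal_leI hb)
    finally show ?thesis .
  qed
  have kn: "kothe_norm X q (indicator Q) \<le> ennreal B"
    unfolding kothe_norm_def using intbound by (intro SUP_least) auto
  define B' where "B' = M\<^sup>2 * measure lebesgue Q / (C\<^sup>2 * q (indicator Q))"
  have BB: "B \<le> B'"
  proof -
    have "1 / (C * q (indicator Q1)) \<le> M / (C\<^sup>2 * q (indicator Q))"
      using CM Cp q0 q1 by (simp add: field_simps power2_eq_square)
    then have "M * measure lebesgue Q * (1 / (C * q (indicator Q1))) \<le> M * measure lebesgue Q * (M / (C\<^sup>2 * q (indicator Q)))"
      using M0 cQ(3) by (intro mult_left_mono) auto
    then show ?thesis unfolding B_def B'_def by (simp add: power2_eq_square mult_ac)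
  qed
  have kn': "kothe_norm X q (indicator Q) \<le> ennreal B'" using kn BB by (meson order_trans ennreal_leI)
  have "ennreal (q (indicator Q) / measure lebesgue Q) * kothe_norm X q (indicator Q)
      \<le> ennreal (q (indicator Q) / measure lebesgue Q) * ennreal B'"
    by (rule mult_left_mono[OF kn']) simp
  also have "\<dots> = ennreal (q (indicator Q) / measure lebesgue Q * B')"
    using q0 cQ(3) B0 BB by (subst ennreal_mult) auto
  also have "q (indicator Q) / measure lebesgue Q * B' = M\<^sup>2 / C\<^sup>2"
    unfolding B'_def using q0 cQ(3) Cp by (simp add: field_simps)
  finally have fin: "ennreal (q (indicator Q) / measure lebesgue Q) * kothe_norm X q (indicator Q) \<le> ennreal (M\<^sup>2 / C\<^sup>2)" .
  have "in_kothe_dual X q (indicator Q)"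
    unfolding in_kothe_dual_def using cQ(1) kn' by (auto simp: le_less_trans[OF _ ennreal_less_top])
  then show ?thesis using QX fin by blast
qed

theorem proposition3p4:
  fixes X :: "('a::euclidean_space \<Rightarrow> real) set"
    and q :: "('a \<Rightarrow> real) \<Rightarrow> real"
    and T :: "('a \<Rightarrow> real) \<Rightarrow> ('a \<Rightarrow> real)"
    and C :: real
  assumes "qbfs X q"
    and "fatou_property X q"
    and "sublinear_on X T"
    and "nondegenerate T C"
    and "bounded_to_weak X q T"
  shows "in_class_A X q \<and> A_const X q \<le> ennreal ((op_norm_weak X q T)\<^sup>2 / C\<^sup>2)"
proof -
  have wb: "weak_bound X q T (op_norm_weak X q T)" using opnorm_bound[OF assms(1,5)] .
  have main: "indicator Q \<in> X \<and> in_kothe_dual X q (indicator Q) \<and>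
    ennreal (q (indicator Q) / measure lebesgue Q) * kothe_norm X q (indicator Q)
      \<le> ennreal ((op_norm_weak X q T)\<^sup>2 / C\<^sup>2)" if cQ: "cube Q" for Q
  proof -
    obtain l where "cube_side Q l" using cQ unfolding cube_def by blast
    then show ?thesis using cube_main[OF assms(1) wb assms(4)] by blast
  qed
  have A: "A_const X q \<le> ennreal ((op_norm_weak X q T)\<^sup>2 / C\<^sup>2)"
    unfolding A_const_def using main by (intro SUP_least) auto
  then have "A_const X q < \<infinity>" by (simp add: le_less_trans[OF _ ennreal_less_top])
  then show ?thesis using A main unfolding in_class_A_def by blast
qed

end
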